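(* Let the standing assumptions of the context hold, let $T>0$, $u_0\in H$, and let $u\in L^\infty([0,T];H)\cap L^2([0,T];V)$ be the variational solution of $u(t)=u_0+\int_0^t\big(Au(s)+b(f(u(s)+\hat v(s))-f(\hat v(s)))\big)ds$ (equality in $V'$), where $\hat v(s):=\hat v(\cdot+cs)$, and put $v(t):=u(t)+\hat v(t)$. Then $$B(t,C):=\langle v(t)-\hat v(\cdot+C),\hat v_x(\cdot+C)\rangle_H$$ is continuous in $(t,C)\in[0,T]\times\mathbb{R}$ and Lipschitz continuous in $C$ with a Lipschitz constant independent of $t\in[0,T]$.
   Context: Standing assumptions: $\nu,b>0$; $f:\mathbb{R}\to\mathbb{R}$ continuously differentiable with $f(0)=f(a)=f(1)=0$ for some $a\in(0,1)$, $f<0$ on $(0,a)$, $f>0$ on $(a,1)$, $f'(0)<0$, $f'(a)>0$, $f'(1)<0$, $\int_0^1 f\,dv\ge0$, and some $v_\ast\in(a,1)$ with $f''>0$ on $[0,v_\ast)$, $f''<0$ on $(v_\ast,1]$; moreover $\eta_1:=\sup_{\mathbb{R}}f'<\infty$, $|f(x_1)-f(x_2)|\le L|x_1-x_2|(1+x_1^2+x_2^2)$ for all $x_1,x_2\in\mathbb{R}$ and some $L<\infty$, and $|f(u+v)-f(v)-f'(v)u|\le\eta_2(1+|u|)|u|^2$ for all $v\in[0,1]$, $u\in\mathbb{R}$. $\hat v$ is a monotone increasing $C^2$ function with $\hat v(-\infty)=0$, $\hat v(+\infty)=1$, $c\hat v_x=\nu\hat v_{xx}+bf(\hat v)$ for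 a constant $c\ge0$. $H=L^2(\mathbb{R})$, $V=H^{1,2}(\mathbb{R})$ with $\|u\|_V^2=\int u^2+u_x^2$, $V\subset H\equiv H'\subset V'$, and $A:V\to V'$, ${}_{V'}\langle Au,w\rangle_V=-\nu\int u_xw_x\,dx$. The variational solution exists and is unique. *)

theory Defs
  imports "HOL-Analysis.Analysis"
begin

text \<open>Elements of H = L^2(R), represented by (measurable, square integrable) real functions.\<close>
definition L2 :: "(real \<Rightarrow> real) \<Rightarrow> bool" where
  "L2 g \<longleftrightarrow> g \<in> borel_measurable lborel \<and> integrable lborel (\<lambda>x. (g x)^2)"

definition weak_deriv :: "(real \<Rightarrow> real) \<Rightarrow> (real \<Rightarrow> real) \<Rightarrow> bool" where
  "weak_deriv g g' \<longleftrightarrow>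
     (\<forall>\<phi> \<phi>'. (\<forall>x. (\<phi> has_real_derivative \<phi>' x) (at x)) \<and> continuous_on UNIV \<phi>' \<and>
              bounded {x. \<phi> x \<noteq> 0} \<longrightarrow>
        (\<integral>x. g x * \<phi>' x \<partial>lborel) = - (\<integral>x. g' x * \<phi> x \<partial>lborel))"

text \<open>Equality in V' is expressed by testing with all
  w in V = H^{1,2}(R) (w with weak derivative w'), using  <A u, w> = - \<nu> \<integral> u_x w_x.
  ux is the (spatial, weak) derivative of u.\<close>
definition variational_solution ::
  "real \<Rightarrow> real \<Rightarrow> (real \<Rightarrow> real) \<Rightarrow> real \<Rightarrow> (real \<Rightarrow> real) \<Rightarrow> real \<Rightarrow> (real \<Rightarrow> real)
     \<Rightarrow> (real \<Rightarrow> real \<Rightarrow> real) \<Rightarrow> bool" where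
  "variational_solution \<nu> b f c vhat T u0 u \<longleftrightarrow>
     (\<forall>t\<in>{0..T}. L2 (u t)) \<and>
     (\<forall>w. L2 w \<longrightarrow> (\<lambda>t. \<integral>x. u t x * w x \<partial>lborel) \<in> borel_measurable (restrict_space lborel {0..T})) \<and>
     (\<exists>M. AE t in lborel. t \<in> {0..T} \<longrightarrow> (\<integral>x. (u t x)^2 \<partial>lborel) \<le> M) \<and>
     (\<exists>ux. (AE t in lborel. t \<in> {0..T} \<longrightarrow> L2 (ux t) \<and> weak_deriv (u t) (ux t)) \<and>
        (\<forall>w. L2 w \<longrightarrow> (\<lambda>t. \<integral>x. ux t x * w x \<partial>lborel) \<in> borel_measurable (restrict_space lborel {0..T})) \<and>
        set_integrable lborel {0..T} (\<lambda>t. \<integral>x. (u t x)^2 + (ux t x)^2 \<partial>lborel) \<and>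
        (\<forall>w w'. L2 w \<and> L2 w' \<and> weak_deriv w w' \<longrightarrow>
           set_integrable lborel {0..T}
             (\<lambda>s. - \<nu> * (\<integral>x. ux s x * w' x \<partial>lborel)
                  + b * (\<integral>x. (f (u s x + vhat (x + c * s)) - f (vhat (x + c * s))) * w x \<partial>lborel)) \<and>
           (\<forall>t\<in>{0..T}.
              (\<integral>x. u t x * w x \<partial>lborel) =
              (\<integral>x. u0 x * w x \<partial>lborel) +
              (LINT s:{0..t}|lborel. - \<nu> * (\<integral>x. ux s x * w' x \<partial>lborel)
                  + b * (\<integral>x. (f (u s x + vhat (x + c * s)) - f (vhat (x + c * s))) * w x \<partial>lborel)))))"

end

theory Submission
  imports Defs
begin


locale tw =
  fixes \<nu> b c a :: real and f vhat vhat' vhat'' :: "real \<Rightarrow> real"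
  assumes nu_pos: "\<nu> > 0" and b_pos: "b > 0" and c_nonneg: "c \<ge> 0"
    and f_cont: "continuous_on UNIV f"
    and a_range: "0 < a" "a < 1"
    and f_zeros: "f 0 = 0" "f 1 = 0"
    and f_neg: "\<And>x. 0 < x \<Longrightarrow> x < a \<Longrightarrow> f x < 0"
    and f_pos: "\<And>x. a < x \<Longrightarrow> x < 1 \<Longrightarrow> f x > 0"
    and vhat_mono: "mono vhat"
    and vhat_deriv: "\<And>x. (vhat has_real_derivative vhat' x) (at x)"
    and vhat'_deriv: "\<And>x. (vhat' has_real_derivative vhat'' x) (at x)"
    and vhat''_cont: "continuous_on UNIV vhat''"
    and vhat_bot: "(vhat \<longlongrightarrow> 0) at_bot"
    and vhat_top: "(vhat \<longlongrightarrow> 1) at_top"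
    and tw_eq: "\<And>x. c * vhat' x = \<nu> * vhat'' x + b * f (vhat x)"
begin

lemma vhat_cont: "continuous_on UNIV vhat"
  using vhat_deriv by (meson DERIV_isCont continuous_at_imp_continuous_on)

lemma vhat'_cont: "continuous_on UNIV vhat'"
  using vhat'_deriv by (meson DERIV_isCont continuous_at_imp_continuous_on)

lemma vhat_ge0: "vhat x \<ge> 0"
proof (rule tendsto_upperbound[OF vhat_bot])
  show "\<forall>\<^sub>F y in at_bot. vhat y \<le> vhat x"
    unfolding eventually_at_bot_linorder using vhat_mono by (auto simp: mono_def)
qed simp

lemma vhat_le1: "vhat x \<le> 1"
proof (rule tendsto_lowerbound[OF vhat_top])
  show "\<forall>\<^sub>F y in at_top. vhat x \<le> vhat y"
    unfolding eventually_at_top_linorder using vhat_mono by (auto simp: mono_def)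
qed simp

lemma vhat'_ge0: "vhat' x \<ge> 0"
  using mono_on_imp_deriv_nonneg[of UNIV vhat "vhat' x" x] vhat_mono vhat_deriv by simp

definition Mf where "Mf = (SOME M. M > 0 \<and> (\<forall>v\<in>{0..1}. \<bar>f v\<bar> \<le> M))"

lemma Mf: "Mf > 0" "\<And>v. v \<in> {0..1} \<Longrightarrow> \<bar>f v\<bar> \<le> Mf"
proof -
  have "compact (f ` {0..1})"
    by (intro compact_continuous_image continuous_on_subset[OF f_cont]) auto
  then obtain M where "M > 0" "\<forall>v\<in>{0..1}. \<bar>f v\<bar> \<le> M"
    using compact_imp_bounded[of "f ` {0..1}"] by (auto simp: bounded_pos)
  then have "\<exists>M. M > 0 \<and> (\<forall>v\<in>{0..1}. \<bar>f v\<bar> \<le> M)" by blast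
  from someI_ex[OF this] show "Mf > 0" "\<And>v. v \<in> {0..1} \<Longrightarrow> \<bar>f v\<bar> \<le> Mf"
    unfolding Mf_def by auto
qed

lemma fvhat_bd: "\<bar>f (vhat x)\<bar> \<le> Mf"
  using Mf(2) vhat_ge0 vhat_le1 by auto

definition R where "R = b * Mf / \<nu>"

lemma R_pos: "R > 0" using Mf b_pos nu_pos by (simp add: R_def)

lemma vhat''_lower: "vhat'' x \<ge> - R"
proof -
  have "\<nu> * vhat'' x = c * vhat' x - b * f (vhat x)" using tw_eq[of x] by simp
  also have "\<dots> \<ge> - (b * Mf)"
  proof -
    have "b * f (vhat x) \<le> b * Mf" using fvhat_bd[of x] b_pos by (intro mult_left_mono) auto
    moreover have "c * vhat' x \<ge> 0" using vhat'_ge0[of x] c_nonneg by simp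
    ultimately show ?thesis by linarith
  qed
  finally have "vhat'' x \<ge> - (b * Mf) / \<nu>" using nu_pos by (simp add: field_simps)
  then show ?thesis by (simp add: R_def)
qed

lemma vhat'_lower: assumes "x \<le> y" shows "vhat' y \<ge> vhat' x - R * (y - x)"
proof -
  have "vhat' x + R * x \<le> vhat' y + R * y"
  proof (rule deriv_nonneg_imp_mono[of x y "\<lambda>z. vhat' z + R * z" "\<lambda>z. vhat'' z + R"])
    fix z show "((\<lambda>z. vhat' z + R * z) has_real_derivative vhat'' z + R) (at z)"
      by (auto intro!: derivative_eq_intros vhat'_deriv)
    show "vhat'' z + R \<ge> 0" using vhat''_lower[of z] by simp
  qed (use assms in auto)
  then show ?thesis by (simp add: algebra_simps)
qed

lemma vhat_incr_lower: assumes "\<delta> \<ge> 0"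
  shows "vhat (x + \<delta>) - vhat x \<ge> \<delta> * vhat' x - R * \<delta>^2 / 2"
proof -
  let ?g = "\<lambda>z. vhat z - vhat' x * z + R * (z - x)^2 / 2"
  have "?g x \<le> ?g (x + \<delta>)"
  proof (rule deriv_nonneg_imp_mono[of x "x+\<delta>" ?g "\<lambda>z. vhat' z - vhat' x + R * (z - x)"])
    fix z show "(?g has_real_derivative vhat' z - vhat' x + R * (z - x)) (at z)"
      by (auto intro!: derivative_eq_intros vhat_deriv simp: power2_eq_square field_simps)
    assume "z \<in> {x..x+\<delta>}"
    then show "vhat' z - vhat' x + R * (z - x) \<ge> 0" using vhat'_lower[of x z] by auto
  qed (use assms in auto)
  then show ?thesis by (simp add: algebra_simps power2_eq_square)
qed

definition B1 where "B1 = 1 + R / 2"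

lemma vhat'_le: "vhat' x \<le> B1"
  using vhat_incr_lower[of 1 x] vhat_le1[of "x+1"] vhat_ge0[of x] by (simp add: B1_def)

definition B2 where "B2 = (c * B1 + b * Mf) / \<nu>"

lemma vhat''_bd: "\<bar>vhat'' x\<bar> \<le> B2"
proof -
  have e: "\<nu> * vhat'' x = c * vhat' x - b * f (vhat x)" using tw_eq[of x] by simp
  then have "\<bar>\<nu> * vhat'' x\<bar> \<le> c * B1 + b * Mf"
  proof -
    have "\<bar>b * f (vhat x)\<bar> \<le> b * Mf" using fvhat_bd[of x] b_pos by (simp add: abs_mult)
    moreover have "c * vhat' x \<ge> 0" "c * vhat' x \<le> c * B1" using vhat'_ge0[of x] vhat'_le[of x] c_nonneg
      by (auto intro: mult_left_mono)
    ultimately show ?thesis unfolding e by linarith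
  qed
  then show ?thesis using nu_pos by (simp add: B2_def abs_mult field_simps)
qed

lemma vhat'_bound_delta: assumes "\<delta> > 0"
  shows "vhat' x \<le> (vhat (x + \<delta>) - vhat x) / \<delta> + R * \<delta> / 2"
proof -
  have "\<delta> * vhat' x \<le> vhat (x + \<delta>) - vhat x + R * \<delta>^2 / 2"
    using vhat_incr_lower[of \<delta> x] assms by simp
  then have "vhat' x \<le> (vhat (x + \<delta>) - vhat x + R * \<delta>^2 / 2) / \<delta>"
    using assms by (simp add: field_simps mult.commute)
  also have "\<dots> = (vhat (x + \<delta>) - vhat x) / \<delta> + R * \<delta> / 2"
    using assms by (simp add: field_simps power2_eq_square)
  finally show ?thesis .
qed

lemma vhat'_tendsto0_gen:
  assumes "\<And>\<delta>. \<delta> > 0 \<Longrightarrow> ((\<lambda>x. vhat (x + \<delta>) - vhat x) \<longlongrightarrow> 0) F"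
  shows "(vhat' \<longlongrightarrow> 0) F"
proof (rule tendstoI)
  fix e :: real assume e: "e > 0"
  define \<delta> where "\<delta> = e / (2 * R)"
  have d: "\<delta> > 0" using e R_pos by (simp add: \<delta>_def)
  have Rd: "R * \<delta> / 2 = e / 4" using R_pos by (simp add: \<delta>_def field_simps)
  have "\<forall>\<^sub>F x in F. dist (vhat (x + \<delta>) - vhat x) 0 < e * \<delta> / 2"
    using tendstoD[OF assms[OF d], of "e * \<delta> / 2"] e d by simp
  then show "\<forall>\<^sub>F x in F. dist (vhat' x) 0 < e"
  proof (rule eventually_mono)
    fix x assume "dist (vhat (x + \<delta>) - vhat x) 0 < e * \<delta> / 2"
    then have "\<bar>vhat (x + \<delta>) - vhat x\<bar> < e * \<delta> / 2" by (simp add: dist_real_def)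
    then have "vhat (x + \<delta>) - vhat x < e * \<delta> / 2" by (meson abs_less_iff)
    then have "(vhat (x + \<delta>) - vhat x) / \<delta> < e / 2" using d by (simp add: field_simps)
    then have "vhat' x < e" using vhat'_bound_delta[OF d, of x] Rd e by linarith
    then show "dist (vhat' x) 0 < e" using vhat'_ge0[of x] by simp
  qed
qed

lemma vhat'_top: "(vhat' \<longlongrightarrow> 0) at_top"
proof (rule vhat'_tendsto0_gen)
  fix \<delta> :: real
  have "filterlim (\<lambda>x. x + \<delta>) at_top at_top"
    by (rule filterlim_tendsto_add_at_top[OF tendsto_const filterlim_ident, of \<delta>, simplified add.commute])
  then have "((\<lambda>x. vhat (x + \<delta>)) \<longlongrightarrow> 1) at_top"
    using filterlim_compose[OF vhat_top] by blast
  then show "((\<lambda>x. vhat (x + \<delta>) - vhat x) \<longlongrightarrow> 0) at_top"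
    using tendsto_diff[OF _ vhat_top] by fastforce
qed

lemma vhat'_bot: "(vhat' \<longlongrightarrow> 0) at_bot"
proof (rule vhat'_tendsto0_gen)
  fix \<delta> :: real
  have "filterlim (\<lambda>x. x + \<delta>) at_bot at_bot"
    unfolding filterlim_at_bot eventually_at_bot_linorder
    by (metis add.commute le_diff_eq)
  then have "((\<lambda>x. vhat (x + \<delta>)) \<longlongrightarrow> 0) at_bot"
    using filterlim_compose[OF vhat_bot] by blast
  then show "((\<lambda>x. vhat (x + \<delta>) - vhat x) \<longlongrightarrow> 0) at_bot"
    using tendsto_diff[OF _ vhat_bot] by fastforce
qed

lemma vhat'_int: "integrable lborel vhat'" and vhat'_integral: "(\<integral>x. vhat' x \<partial>lborel) = 1"
proof -
  have A: "set_integrable lborel (einterval (-\<infinity>) \<infinity>) vhat'"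
    and B: "(LBINT x=-\<infinity>..\<infinity>. vhat' x) = 1 - 0"
    by (rule interval_integral_FTC_nonneg[where F=vhat and A=0 and B=1];
        auto simp: ereal_tendsto_simps1 vhat_deriv vhat'_ge0 vhat_top vhat_bot
             intro!: DERIV_isCont vhat'_deriv)+
  from A show "integrable lborel vhat'" by (simp add: set_integrable_def)
  from B show "(\<integral>x. vhat' x \<partial>lborel) = 1"
    by (simp add: interval_lebesgue_integral_def set_lebesgue_integral_def)
qed

lemma fvhat_cont: "continuous_on UNIV (\<lambda>x. f (vhat x))"
  by (rule continuous_on_compose2[OF f_cont vhat_cont]) auto

lemma fvhat_int: "integrable lborel (\<lambda>x. f (vhat x))"
proof -
  obtain x0 where x0: "vhat x0 < a"
    using order_tendstoD(2)[OF vhat_bot a_range(1)] by (auto simp: eventually_at_bot_linorder)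
  obtain x1 where x1: "vhat x1 > a"
    using order_tendstoD(1)[OF vhat_top a_range(2)] by (auto simp: eventually_at_top_linorder)
  have neg: "f (vhat x) \<le> 0" if "x < x0" for x
  proof -
    have "vhat x \<le> vhat x0" using vhat_mono that by (auto simp: mono_def)
    then show ?thesis using f_neg[of "vhat x"] f_zeros vhat_ge0[of x] x0
      by (cases "vhat x = 0") auto
  qed
  have pos: "f (vhat x) \<ge> 0" if "x > x1" for x
  proof -
    have "vhat x \<ge> vhat x1" using vhat_mono that by (auto simp: mono_def)
    then show ?thesis using f_pos[of "vhat x"] f_zeros vhat_le1[of x] x1
      by (cases "vhat x = 1") auto
  qed
  have contF: "isCont (\<lambda>x. f (vhat x)) x" for x
    using fvhat_cont by (simp add: continuous_on_eq_continuous_at)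
  have D1: "((\<lambda>x. (\<nu> * vhat' x - c * vhat x) / b) has_real_derivative - f (vhat x)) (at x)" for x
  proof -
    have "((\<lambda>x. (\<nu> * vhat' x - c * vhat x) / b) has_real_derivative (\<nu> * vhat'' x - c * vhat' x) / b) (at x)"
      using b_pos by (auto intro!: derivative_eq_intros vhat_deriv vhat'_deriv)
    moreover have "(\<nu> * vhat'' x - c * vhat' x) / b = - f (vhat x)"
      using tw_eq[of x] b_pos by (simp add: field_simps)
    ultimately show ?thesis by simp
  qed
  have D2: "((\<lambda>x. (c * vhat x - \<nu> * vhat' x) / b) has_real_derivative f (vhat x)) (at x)" for x
  proof -
    have "((\<lambda>x. (c * vhat x - \<nu> * vhat' x) / b) has_real_derivative (c * vhat' x - \<nu> * vhat'' x) / b) (at x)"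
      using b_pos by (auto intro!: derivative_eq_intros vhat_deriv vhat'_deriv)
    moreover have "(c * vhat' x - \<nu> * vhat'' x) / b = f (vhat x)"
      using tw_eq[of x] b_pos by (simp add: field_simps)
    ultimately show ?thesis by simp
  qed
  have contF1: "isCont (\<lambda>x. (\<nu> * vhat' x - c * vhat x) / b) x" for x
    using D1 by (rule DERIV_isCont)
  have contF2: "isCont (\<lambda>x. (c * vhat x - \<nu> * vhat' x) / b) x" for x
    using D2 by (rule DERIV_isCont)
  have I1: "set_integrable lborel (einterval (-\<infinity>) (ereal x0)) (\<lambda>x. - f (vhat x))"
  proof (rule interval_integral_FTC_nonneg(1)[where F="\<lambda>x. (\<nu> * vhat' x - c * vhat x) / b"])
    show "(((\<lambda>x. (\<nu> * vhat' x - c * vhat x) / b) \<circ> real_of_ereal) \<longlongrightarrow> (\<nu> * 0 - c * 0) / b) (at_right (-\<infinity>))"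
      unfolding ereal_tendsto_simps1
      using b_pos by (intro tendsto_intros vhat'_bot vhat_bot) auto
    show "(((\<lambda>x. (\<nu> * vhat' x - c * vhat x) / b) \<circ> real_of_ereal) \<longlongrightarrow> (\<nu> * vhat' x0 - c * vhat x0) / b) (at_left (ereal x0))"
      unfolding ereal_tendsto_simps1
      using contF1[of x0] by (simp add: isCont_def filterlim_at_split)
  qed (auto simp: D1 contF neg)
  have I2: "set_integrable lborel (einterval (ereal x1) \<infinity>) (\<lambda>x. f (vhat x))"
  proof (rule interval_integral_FTC_nonneg(1)[where F="\<lambda>x. (c * vhat x - \<nu> * vhat' x) / b"])
    show "(((\<lambda>x. (c * vhat x - \<nu> * vhat' x) / b) \<circ> real_of_ereal) \<longlongrightarrow> (c * 1 - \<nu> * 0) / b) (at_left \<infinity>)"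
      unfolding ereal_tendsto_simps1
      using b_pos by (intro tendsto_intros vhat'_top vhat_top) auto
    show "(((\<lambda>x. (c * vhat x - \<nu> * vhat' x) / b) \<circ> real_of_ereal) \<longlongrightarrow> (c * vhat x1 - \<nu> * vhat' x1) / b) (at_right (ereal x1))"
      unfolding ereal_tendsto_simps1
      using contF2[of x1] by (simp add: isCont_def filterlim_at_split)
  qed (auto simp: D2 contF pos)
  have I1': "set_integrable lborel {..<x0} (\<lambda>x. f (vhat x))"
    using Bochner_Integration.integrable_minus[OF I1[unfolded set_integrable_def]] unfolding set_integrable_def by simp
  have I2': "set_integrable lborel {x1<..} (\<lambda>x. f (vhat x))"
    using I2 by simp
  have I3: "set_integrable lborel {x0..x1} (\<lambda>x. f (vhat x))"
    by (rule borel_integrable_atLeastAtMost'[OF continuous_on_subset[OF fvhat_cont]]) auto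
  have "set_integrable lborel ({..<x0} \<union> {x0..x1} \<union> {x1<..}) (\<lambda>x. f (vhat x))"
    by (intro set_integrable_Un I1' I2' I3) auto
  moreover have "{..<x0} \<union> {x0..x1} \<union> {x1<..} = UNIV" by auto
  ultimately show ?thesis by (simp add: set_integrable_def)
qed

lemma vhat''_eq: "vhat'' x = (c * vhat' x - b * f (vhat x)) / \<nu>"
  using tw_eq[of x] nu_pos by (simp add: field_simps)

lemma vhat''_int: "integrable lborel vhat''"
proof -
  have "integrable lborel (\<lambda>x. (c * vhat' x - b * f (vhat x)) / \<nu>)"
    using vhat'_int fvhat_int by auto
  then show ?thesis by (simp add: vhat''_eq[abs_def])
qed

lemma bdd_int_sq:
  fixes g :: "real \<Rightarrow> real"
  assumes "continuous_on UNIV g" "integrable lborel g" "\<And>x. \<bar>g x\<bar> \<le> B"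
  shows "integrable lborel (\<lambda>x. (g x)^2)"
proof (rule Bochner_Integration.integrable_bound[where f="\<lambda>x. B * \<bar>g x\<bar>"])
  show "integrable lborel (\<lambda>x. B * \<bar>g x\<bar>)" using assms(2) by auto
  show "(\<lambda>x. (g x)^2) \<in> borel_measurable lborel"
    using assms(1) by (intro borel_measurable_power) (simp add: borel_measurable_continuous_onI)
  show "AE x in lborel. norm ((g x)^2) \<le> norm (B * \<bar>g x\<bar>)"
  proof (rule AE_I2)
    fix x have "\<bar>g x\<bar> * \<bar>g x\<bar> \<le> B * \<bar>g x\<bar>" using assms(3)[of x] by (intro mult_right_mono) auto
    moreover have "B \<ge> 0" using assms(3)[of x] by linarith
    ultimately show "norm ((g x)^2) \<le> norm (B * \<bar>g x\<bar>)"
      by (simp add: power2_eq_square abs_mult)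
  qed
qed

lemma vhat'_sq_int: "integrable lborel (\<lambda>x. (vhat' x)^2)"
  by (rule bdd_int_sq[OF vhat'_cont vhat'_int, of B1]) (use vhat'_ge0 vhat'_le in auto)

lemma vhat''_sq_int: "integrable lborel (\<lambda>x. (vhat'' x)^2)"
  by (rule bdd_int_sq[OF vhat''_cont vhat''_int vhat''_bd])

end


lemma weak_deriv_C1:
  fixes g g' :: "real \<Rightarrow> real"
  assumes gd: "\<And>x. (g has_real_derivative g' x) (at x)" and g'c: "continuous_on UNIV g'"
  shows "weak_deriv g g'"
  unfolding weak_deriv_def
proof (intro allI impI, elim conjE)
  fix \<phi> \<phi>' :: "real \<Rightarrow> real"
  assume pd: "\<forall>x. (\<phi> has_real_derivative \<phi>' x) (at x)" and pc: "continuous_on UNIV \<phi>'"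
    and bd: "bounded {x. \<phi> x \<noteq> 0}"
  obtain R0 where R0: "\<And>x. \<phi> x \<noteq> 0 \<Longrightarrow> \<bar>x\<bar> \<le> R0"
    using bd unfolding bounded_real by auto
  define R where "R = \<bar>R0\<bar> + 1"
  have phi0: "\<phi> x = 0" if "\<bar>x\<bar> > R - 1" for x
    using R0[of x] that by (force simp: R_def)
  have phi'0: "\<phi>' x = 0" if "\<bar>x\<bar> > R - 1" for x
  proof -
    have "((\<lambda>_. 0) has_real_derivative \<phi>' x) (at x)"
    proof (rule has_field_derivative_transform_within_open[OF pd[rule_format, of x], where S="{y. \<bar>y\<bar> > R - 1}"])
      show "open {y::real. \<bar>y\<bar> > R - 1}"
        by (intro open_Collect_less continuous_intros)
    qed (use that phi0 in auto)
    then show ?thesis using DERIV_const DERIV_unique by blast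
  qed
  have gc: "continuous_on UNIV g" using gd by (meson DERIV_isCont continuous_at_imp_continuous_on)
  have phic: "continuous_on UNIV \<phi>" using pd by (meson DERIV_isCont continuous_at_imp_continuous_on)
  have e1: "(\<integral>x. g x * \<phi>' x \<partial>lborel) = (\<integral>x. indicator {-R..R} x *\<^sub>R (g x * \<phi>' x) \<partial>lborel)"
  proof (rule Bochner_Integration.integral_cong)
    fix x show "g x * \<phi>' x = indicator {-R..R} x *\<^sub>R (g x * \<phi>' x)"
    proof (cases "x \<in> {-R..R}")
      case False then have "\<bar>x\<bar> > R - 1" by auto
      then show ?thesis using phi'0[of x] False by simp
    qed simp
  qed simp
  have e2: "(\<integral>x. g' x * \<phi> x \<partial>lborel) = (\<integral>x. indicator {-R..R} x *\<^sub>R (g' x * \<phi> x) \<partial>lborel)"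
  proof (rule Bochner_Integration.integral_cong)
    fix x show "g' x * \<phi> x = indicator {-R..R} x *\<^sub>R (g' x * \<phi> x)"
    proof (cases "x \<in> {-R..R}")
      case False then have "\<bar>x\<bar> > R - 1" by auto
      then show ?thesis using phi0[of x] False by simp
    qed simp
  qed simp
  have i1: "integrable lborel (\<lambda>x. indicator {-R..R} x *\<^sub>R (g x * \<phi>' x))"
    using borel_integrable_atLeastAtMost'[of "-R" R "\<lambda>x. g x * \<phi>' x"] gc pc
    unfolding set_integrable_def by (auto intro!: continuous_intros intro: continuous_on_subset)
  have i2: "integrable lborel (\<lambda>x. indicator {-R..R} x *\<^sub>R (g' x * \<phi> x))"
    using borel_integrable_atLeastAtMost'[of "-R" R "\<lambda>x. g' x * \<phi> x"] g'c phic
    unfolding set_integrable_def by (auto intro!: continuous_intros intro: continuous_on_subset)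
  have "integral\<^sup>L lborel (\<lambda>x. indicator {-R .. R} x *\<^sub>R (g' x * \<phi> x + g x * \<phi>' x))
      = g R * \<phi> R - g (-R) * \<phi> (-R)"
  proof (rule integral_FTC_atLeastAtMost)
    show "-R \<le> R" by (simp add: R_def)
    fix x
    have "((\<lambda>x. g x * \<phi> x) has_real_derivative (g' x * \<phi> x + g x * \<phi>' x)) (at x)"
      using gd[of x] pd by (auto intro!: derivative_eq_intros)
    then show "((\<lambda>x. g x * \<phi> x) has_vector_derivative (g' x * \<phi> x + g x * \<phi>' x)) (at x within {-R..R})"
      by (simp add: has_real_derivative_iff_has_vector_derivative has_vector_derivative_at_within)
  next
    show "continuous_on {-R..R} (\<lambda>x. g' x * \<phi> x + g x * \<phi>' x)"
      using gc pc g'c phic by (auto intro!: continuous_intros intro: continuous_on_subset)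
  qed
  also have "\<dots> = 0" using phi0[of R] phi0[of "-R"] by (simp add: R_def)
  finally have E: "integral\<^sup>L lborel (\<lambda>x. indicator {-R .. R} x *\<^sub>R (g' x * \<phi> x + g x * \<phi>' x)) = 0" .
  have "integral\<^sup>L lborel (\<lambda>x. indicator {-R .. R} x *\<^sub>R (g' x * \<phi> x + g x * \<phi>' x)) =
     (\<integral>x. indicator {-R..R} x *\<^sub>R (g' x * \<phi> x) \<partial>lborel) + (\<integral>x. indicator {-R..R} x *\<^sub>R (g x * \<phi>' x) \<partial>lborel)"
    unfolding scaleR_add_right by (rule Bochner_Integration.integral_add[OF i2 i1])
  with E have "(\<integral>x. indicator {-R..R} x *\<^sub>R (g' x * \<phi> x) \<partial>lborel) + (\<integral>x. indicator {-R..R} x *\<^sub>R (g x * \<phi>' x) \<partial>lborel) = 0"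
    by simp
  then show "(\<integral>x. g x * \<phi>' x \<partial>lborel) = - (\<integral>x. g' x * \<phi> x \<partial>lborel)"
    unfolding e1 e2 by linarith
qed



lemma integral_shift:
  fixes h :: "real \<Rightarrow> real"
  shows "(\<integral>x. h (x + C) \<partial>lborel) = (\<integral>x. h x \<partial>lborel)"
  using lborel_integral_real_affine[of 1 h C] by (simp add: add.commute)

lemma integrable_shift:
  fixes h :: "real \<Rightarrow> real"
  shows "integrable lborel (\<lambda>x. h (x + C)) \<longleftrightarrow> integrable lborel h"
  using lborel_integrable_real_affine_iff[of 1 h C] by (simp add: add.commute)

lemma cs_interval:
  fixes k :: "real \<Rightarrow> real"
  assumes kc: "continuous_on {0..d} k" and d: "d \<ge> 0"
  shows "(integral {0..d} k)^2 \<le> d * integral {0..d} (\<lambda>s. (k s)^2)"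
proof (cases "d = 0")
  case True then show ?thesis by simp
next
  case False
  with d have dp: "d > 0" by simp
  define A where "A = integral {0..d} k"
  define Q where "Q = integral {0..d} (\<lambda>s. (k s)^2)"
  have hk: "(k has_integral A) {0..d}" unfolding A_def
    using integrable_continuous_interval[OF kc] by (simp add: integrable_integral)
  have kc2: "continuous_on {0..d} (\<lambda>s. (k s)^2)" using kc by (intro continuous_intros)
  have hq: "((\<lambda>s. (k s)^2) has_integral Q) {0..d}" unfolding Q_def
    using integrable_continuous_interval[OF kc2] by (simp add: integrable_integral)
  have h: "((\<lambda>s. d^2 * (k s)^2 - (2*d*A) * k s + A^2) has_integral (d^2*Q - (2*d*A)*A + d*A^2)) {0..d}"
  proof -
    have "((\<lambda>s. d^2 * (k s)^2 - (2*d*A) * k s + A^2) has_integral (d^2*Q - (2*d*A)*A + Henstock_Kurzweil_Integration.content {0..d} *\<^sub>R A^2)) {0..d}"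
      by (intro has_integral_add has_integral_diff has_integral_mult_right hk hq has_integral_const_real)
    then show ?thesis using d by simp
  qed
  have "0 \<le> d^2*Q - (2*d*A)*A + d*A^2"
  proof (rule has_integral_nonneg[OF h])
    fix s
    have "d^2 * (k s)^2 - (2*d*A) * k s + A^2 = (d * k s - A)^2" by (simp add: power2_eq_square algebra_simps)
    then show "0 \<le> d^2 * (k s)^2 - (2*d*A) * k s + A^2" by simp
  qed
  then have "0 \<le> d * (d * Q - A^2)" by (simp add: power2_eq_square algebra_simps)
  then have "0 \<le> d * Q - A^2" using dp by (simp add: zero_le_mult_iff)
  then show ?thesis unfolding A_def Q_def by simp
qed

lemma shift_L2_bound:
  fixes g g' :: "real \<Rightarrow> real"
  assumes gd: "\<And>x. (g has_real_derivative g' x) (at x)" and g'c: "continuous_on UNIV g'"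
    and gsq: "integrable lborel (\<lambda>x. (g x)^2)" and g'sq: "integrable lborel (\<lambda>x. (g' x)^2)"
    and d: "d \<ge> 0"
  shows "(\<integral>y. (g (y + d) - g y)^2 \<partial>lborel) \<le> d^2 * (\<integral>x. (g' x)^2 \<partial>lborel)"
proof -
  define N where "N = (\<integral>x. (g' x)^2 \<partial>lborel)"
  define G where "G = (\<lambda>y. (g (y + d) - g y)^2)"
  define F where "F = (\<lambda>y s. (g' (y + s))^2)"
  have gc: "continuous_on UNIV g" using gd by (meson DERIV_isCont continuous_at_imp_continuous_on)
  have Gc: "continuous_on UNIV G" unfolding G_def
    by (intro continuous_intros continuous_on_compose2[OF gc]) auto
  have Fc: "continuous_on UNIV (\<lambda>p. F (fst p) (snd p))" unfolding F_def
    by (intro continuous_intros continuous_on_compose2[OF g'c]) auto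
  have Fc': "continuous_on UNIV (\<lambda>p. F (snd p) (fst p))" unfolding F_def
    by (intro continuous_intros continuous_on_compose2[OF g'c]) auto
  have Gint: "integrable lborel G"
  proof (rule Bochner_Integration.integrable_bound[where f="\<lambda>y. 2 * (g (y + d))^2 + 2 * (g y)^2"])
    show "integrable lborel (\<lambda>y. 2 * (g (y + d))^2 + 2 * (g y)^2)"
      using gsq integrable_shift[of "\<lambda>x. (g x)^2" d] by auto
    show "G \<in> borel_measurable lborel" using Gc by (simp add: borel_measurable_continuous_onI)
    show "AE y in lborel. norm (G y) \<le> norm (2 * (g (y + d))^2 + 2 * (g y)^2)"
    proof (rule AE_I2)
      fix y
      have "(g (y + d) - g y)^2 \<le> 2 * (g (y + d))^2 + 2 * (g y)^2"
        using sum_squares_ge_zero[of "g (y+d) + g y" 0] by (simp add: power2_eq_square algebra_simps)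
      then show "norm (G y) \<le> norm (2 * (g (y + d))^2 + 2 * (g y)^2)" by (simp add: G_def)
    qed
  qed
  have pw: "G y \<le> d * integral {0..d} (F y)" for y
  proof -
    have der: "((\<lambda>s. g (y + s)) has_real_derivative g' (y + s)) (at s)" for s
    proof -
      have i: "((\<lambda>s. y + s) has_real_derivative 1) (at s)" by (auto intro!: derivative_eq_intros)
      from DERIV_chain2[OF gd i] show ?thesis by simp
    qed
    have "((\<lambda>s. g' (y + s)) has_integral (g (y + d) - g (y + 0))) {0..d}"
      by (rule fundamental_theorem_of_calculus[OF d])
         (auto simp: has_real_derivative_iff_has_vector_derivative[symmetric] intro!: DERIV_subset[OF der])
    then have A: "integral {0..d} (\<lambda>s. g' (y + s)) = g (y + d) - g y" by (simp add: integral_unique)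
    have "continuous_on {0..d} (\<lambda>s. g' (y + s))"
      by (intro continuous_intros continuous_on_compose2[OF g'c]) auto
    from cs_interval[OF this d] show ?thesis unfolding A G_def F_def by simp
  qed
  have win: "integral {-R..R} G \<le> d^2 * N" if R: "R \<ge> 0" for R
  proof -
    have c1: "continuous_on {-R..R} (\<lambda>y. integral (cbox 0 d) (F y))"
      by (rule integral_continuous_on_param) (auto intro: continuous_on_subset[OF Fc] simp: case_prod_beta)
    have c2: "continuous_on {0..d} (\<lambda>s. integral (cbox (-R) R) (\<lambda>y. F y s))"
      by (rule integral_continuous_on_param) (auto intro: continuous_on_subset[OF Fc'] simp: case_prod_beta)
    have "integral {-R..R} G \<le> integral {-R..R} (\<lambda>y. d * integral {0..d} (F y))"
    proof (rule integral_le)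
      show "G integrable_on {-R..R}"
        by (rule integrable_continuous_interval[OF continuous_on_subset[OF Gc]]) auto
      show "(\<lambda>y. d * integral {0..d} (F y)) integrable_on {-R..R}"
        using c1 by (intro integrable_continuous_interval continuous_intros) (simp add: box_real)
    qed (use pw in auto)
    also have "\<dots> = d * integral {-R..R} (\<lambda>y. integral {0..d} (F y))" by simp
    also have "integral {-R..R} (\<lambda>y. integral {0..d} (F y)) = integral {0..d} (\<lambda>s. integral {-R..R} (\<lambda>y. F y s))"
      using integral_swap_continuous[of "-R" 0 R d F] continuous_on_subset[OF Fc]
      by (simp add: box_real case_prod_beta)
    also have "\<dots> \<le> integral {0..d} (\<lambda>s. N)"
    proof (rule integral_le)
      show "(\<lambda>s. integral {-R..R} (\<lambda>y. F y s)) integrable_on {0..d}"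
        using c2 by (intro integrable_continuous_interval) (simp add: box_real)
      fix s
      have I: "integrable lborel (\<lambda>y. F y s)" unfolding F_def using g'sq integrable_shift[of "\<lambda>x. (g' x)^2" s]
        by (simp add: add.commute)
      have "integral {-R..R} (\<lambda>y. F y s) \<le> integral UNIV (\<lambda>y. F y s)"
      proof (rule integral_subset_le)
        show "(\<lambda>y. F y s) integrable_on {-R..R}"
          by (rule integrable_continuous_interval) (auto intro: continuous_on_subset[OF Fc'] continuous_on_compose2[OF Fc'] simp: F_def intro!: continuous_intros continuous_on_compose2[OF g'c])
        show "(\<lambda>y. F y s) integrable_on UNIV" using I by (rule integrable_on_lborel)
      qed (auto simp: F_def)
      also have "\<dots> = N" using integral_lborel[OF I]
        using integral_shift[of "\<lambda>x. (g' x)^2" s] by (simp add: N_def F_def)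
      finally show "integral {-R..R} (\<lambda>y. F y s) \<le> N" .
    qed (rule integrable_const_ivl)
    also have "integral {0..d} (\<lambda>s. N) = d * N" using d by simp
    finally show ?thesis using d by (simp add: power2_eq_square mult_left_mono mult.assoc)
  qed
  define A where "A = (\<lambda>n::nat. {- real n .. real n})"
  have "(\<lambda>n. LINT y:A n|lborel. G y) \<longlonglongrightarrow> (LINT y:(\<Union>n. A n)|lborel. G y)"
  proof (rule set_integral_cont_up)
    show "incseq A" unfolding A_def incseq_def by auto
    have "(\<Union>n. A n) = UNIV"
    proof -
      have "x \<in> A (nat \<lceil>\<bar>x\<bar>\<rceil>)" for x unfolding A_def
        by (auto simp: abs_le_iff) (linarith, linarith)
      then show ?thesis by auto
    qed
    then show "set_integrable lborel (\<Union>n. A n) G" unfolding set_integrable_def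
      using Gint by simp
  qed (auto simp: A_def)
  moreover have "(\<Union>n. A n) = UNIV"
  proof -
    have "x \<in> A (nat \<lceil>\<bar>x\<bar>\<rceil>)" for x unfolding A_def
      by (auto simp: abs_le_iff) (linarith, linarith)
    then show ?thesis by auto
  qed
  ultimately have lim: "(\<lambda>n. LINT y:A n|lborel. G y) \<longlonglongrightarrow> (\<integral>y. G y \<partial>lborel)"
    by (simp add: set_lebesgue_integral_def)
  have "(LINT y:A n|lborel. G y) \<le> d^2 * N" for n
  proof -
    have "set_integrable lborel (A n) G" unfolding set_integrable_def
      using Gint by (intro integrable_mult_indicator) (auto simp: A_def)
    then have "(LINT y:A n|lborel. G y) = integral (A n) G" by (rule set_borel_integral_eq_integral)
    then show ?thesis using win[of "real n"] by (simp add: A_def)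
  qed
  then have "(\<integral>y. G y \<partial>lborel) \<le> d^2 * N"
    by (intro LIMSEQ_le_const2[OF lim]) auto
  then show ?thesis by (simp add: G_def N_def)
qed



lemma L2_prod_int:
  assumes "L2 g" "L2 h"
  shows "integrable lborel (\<lambda>x. g x * h x)"
proof (rule Bochner_Integration.integrable_bound[where f="\<lambda>x. (g x)^2 + (h x)^2"])
  show "integrable lborel (\<lambda>x. (g x)^2 + (h x)^2)" using assms by (auto simp: L2_def)
  show "(\<lambda>x. g x * h x) \<in> borel_measurable lborel" using assms by (auto simp: L2_def)
  show "AE x in lborel. norm (g x * h x) \<le> norm ((g x)^2 + (h x)^2)"
  proof (rule AE_I2)
    fix x
    have "0 \<le> (\<bar>g x\<bar> - \<bar>h x\<bar>)^2" by simp
    then have "2 * \<bar>g x * h x\<bar> \<le> (g x)^2 + (h x)^2"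
      by (simp add: power2_eq_square algebra_simps abs_mult)
    then show "norm (g x * h x) \<le> norm ((g x)^2 + (h x)^2)" by simp
  qed
qed

lemma L2_amgm:
  assumes "L2 g" "L2 h" "l > 0"
  shows "\<bar>\<integral>x. g x * h x \<partial>lborel\<bar> \<le> (l * (\<integral>x. (g x)^2 \<partial>lborel) + (\<integral>x. (h x)^2 \<partial>lborel) / l) / 2"
proof -
  have ig: "integrable lborel (\<lambda>x. (g x)^2)" and ih: "integrable lborel (\<lambda>x. (h x)^2)"
    using assms by (auto simp: L2_def)
  have "\<bar>\<integral>x. g x * h x \<partial>lborel\<bar> \<le> (\<integral>x. \<bar>g x * h x\<bar> \<partial>lborel)"
    using integral_norm_bound[of lborel "\<lambda>x. g x * h x"] by simp
  also have "\<dots> \<le> (\<integral>x. (l * (g x)^2 + (h x)^2 / l) / 2 \<partial>lborel)"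
  proof (rule Bochner_Integration.integral_mono)
    show "integrable lborel (\<lambda>x. \<bar>g x * h x\<bar>)" using L2_prod_int[OF assms(1,2)] by auto
    show "integrable lborel (\<lambda>x. (l * (g x)^2 + (h x)^2 / l) / 2)" using ig ih by auto
    fix x
    have "0 \<le> (l * \<bar>g x\<bar> - \<bar>h x\<bar>)^2 / l" using assms(3) by simp
    also have "(l * \<bar>g x\<bar> - \<bar>h x\<bar>)^2 / l = l * (g x)^2 + (h x)^2 / l - 2 * \<bar>g x * h x\<bar>"
      using assms(3) by (simp add: power2_eq_square field_simps abs_mult)
    finally show "\<bar>g x * h x\<bar> \<le> (l * (g x)^2 + (h x)^2 / l) / 2" by simp
  qed
  also have "\<dots> = (l * (\<integral>x. (g x)^2 \<partial>lborel) + (\<integral>x. (h x)^2 \<partial>lborel) / l) / 2"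
    using ig ih by simp
  finally show ?thesis .
qed

lemma AE_to_all:
  fixes h :: "real \<Rightarrow> real"
  assumes hc: "continuous_on {0..T} h" and T: "T > 0"
    and ae: "AE t in lborel. t \<in> {0..T} \<longrightarrow> h t \<le> B"
  shows "\<forall>t\<in>{0..T}. h t \<le> B"
proof (rule ccontr)
  assume "\<not> ?thesis"
  then obtain t0 where t0: "t0 \<in> {0..T}" "h t0 > B" by auto
  obtain d where d: "d > 0" "\<And>t. t \<in> {0..T} \<Longrightarrow> dist t t0 < d \<Longrightarrow> dist (h t) (h t0) < h t0 - B"
    using hc t0 unfolding continuous_on_iff by (metis diff_gt_0_iff_gt)
  define p where "p = max 0 (t0 - d/2)"
  define q where "q = min T (t0 + d/2)"
  have pq: "p < q" using t0 d T by (auto simp: p_def q_def)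
  have sub: "{p..q} \<subseteq> {0..T}" using t0 by (auto simp: p_def q_def)
  have gt: "h t > B" if "t \<in> {p..q}" for t
  proof -
    have "t \<in> {0..T}" using sub that by auto
    moreover have "dist t t0 < d" using that d by (auto simp: p_def q_def dist_real_def)
    ultimately have "dist (h t) (h t0) < h t0 - B" by (rule d(2))
    then show ?thesis by (auto simp: dist_real_def)
  qed
  have "AE t in lborel. t \<notin> {p..q}"
    using ae by eventually_elim (use sub gt in force)
  moreover have "(AE t in lborel. t \<notin> {p..q}) \<longleftrightarrow> emeasure lborel {p..q} = 0"
    by (rule AE_iff_measurable) auto
  ultimately have "emeasure lborel {p..q} = 0" by simp
  then show False using pq by simp
qed

lemma joint_cont:
  fixes h :: "real \<Rightarrow> real \<Rightarrow> real"
  assumes hc: "\<And>C. continuous_on S (\<lambda>t. h t C)"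
    and lip: "\<And>t C1 C2. t \<in> S \<Longrightarrow> \<bar>h t C1 - h t C2\<bar> \<le> K * \<bar>C1 - C2\<bar>"
  shows "continuous_on (S \<times> UNIV) (\<lambda>(t, C). h t C)"
  unfolding continuous_on_iff
proof (intro ballI allI impI)
  fix x :: "real \<times> real" and e :: real
  assume x: "x \<in> S \<times> UNIV" and e: "e > 0"
  obtain t0 C0 where x0: "x = (t0, C0)" by (cases x)
  with x have t0: "t0 \<in> S" by auto
  obtain d1 where d1: "d1 > 0" "\<And>t. t \<in> S \<Longrightarrow> dist t t0 < d1 \<Longrightarrow> dist (h t C0) (h t0 C0) < e / 2"
    using hc[of C0] t0 e unfolding continuous_on_iff by (metis half_gt_zero)
  define d where "d = min d1 (e / (2 * (\<bar>K\<bar> + 1)))"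
  have d: "d > 0" using d1 e by (simp add: d_def)
  show "\<exists>d>0. \<forall>x'\<in>S \<times> UNIV. dist x' x < d \<longrightarrow> dist ((\<lambda>(t, C). h t C) x') ((\<lambda>(t, C). h t C) x) < e"
  proof (intro exI conjI ballI impI)
    show "d > 0" by (fact d)
    fix y assume y: "y \<in> S \<times> UNIV" and dy: "dist y x < d"
    obtain t C where yy: "y = (t, C)" by (cases y)
    with y have t: "t \<in> S" by auto
    have dt: "dist t t0 < d1" using dy dist_fst_le[of y x] d_def unfolding yy x0 by auto
    have dC: "\<bar>C - C0\<bar> < e / (2 * (\<bar>K\<bar> + 1))"
      using dy dist_snd_le[of y x] d_def unfolding yy x0 by (auto simp: dist_real_def)
    have "\<bar>h t C - h t C0\<bar> \<le> K * \<bar>C - C0\<bar>" by (rule lip[OF t])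
    also have "\<dots> \<le> (\<bar>K\<bar> + 1) * \<bar>C - C0\<bar>" by (intro mult_right_mono) auto
    also have "\<dots> \<le> (\<bar>K\<bar> + 1) * (e / (2 * (\<bar>K\<bar> + 1)))"
      using dC by (intro mult_left_mono) auto
    also have "\<dots> = e / 2" by (simp add: field_simps)
    finally have 1: "\<bar>h t C - h t C0\<bar> \<le> e / 2" .
    have 2: "\<bar>h t C0 - h t0 C0\<bar> < e / 2" using d1(2)[OF t dt] by (simp add: dist_real_def)
    show "dist ((\<lambda>(t, C). h t C) y) ((\<lambda>(t, C). h t C) x) < e"
      using 1 2 unfolding yy x0 dist_real_def by (simp only: case_prod_conv abs_le_iff abs_less_iff) linarith
  qed
qed

lemma cont_set_integral:
  fixes \<phi> :: "real \<Rightarrow> real"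
  assumes "set_integrable lborel {0..T} \<phi>"
  shows "continuous_on {0..T} (\<lambda>t. LINT s:{0..t}|lborel. \<phi> s)"
proof -
  have "\<phi> integrable_on {0..T}" using set_borel_integral_eq_integral(1)[OF assms] .
  then have c: "continuous_on {0..T} (\<lambda>t. integral {0..t} \<phi>)" by (rule indefinite_integral_continuous_1)
  show ?thesis
  proof (rule continuous_on_cong[THEN iffD1, OF refl _ c])
    fix t assume "t \<in> {0..T}"
    then have "set_integrable lborel {0..t} \<phi>"
      by (intro set_integrable_subset[OF assms]) auto
    then show "integral {0..t} \<phi> = (LINT s:{0..t}|lborel. \<phi> s)"
      by (rule set_borel_integral_eq_integral(2)[symmetric])
  qed
qed


context tw
begin

lemma vhat_lip: "\<bar>vhat x - vhat y\<bar> \<le> B1 * \<bar>x - y\<bar>"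
proof -
  have *: "\<bar>vhat q - vhat p\<bar> \<le> B1 * \<bar>q - p\<bar>" if "p < q" for p q
  proof -
    have "\<exists>z>p. z < q \<and> vhat q - vhat p = (q - p) * vhat' z"
      by (rule MVT2[OF that]) (rule vhat_deriv)
    then obtain z where "p < z" "z < q" "vhat q - vhat p = (q - p) * vhat' z" by blast
    moreover have "\<bar>vhat' z\<bar> \<le> B1" using vhat'_ge0[of z] vhat'_le[of z] by simp
    ultimately show ?thesis using that by (simp add: abs_mult mult.commute mult_right_mono)
  qed
  show ?thesis
    using *[of x y] *[of y x] by (cases "x < y") (auto simp: abs_minus_commute, cases "x = y", auto)
qed

definition P where "P z = (\<integral>y. (vhat (y + z) - vhat y) * vhat' y \<partial>lborel)"

lemma P_integrable: "integrable lborel (\<lambda>y. (vhat (y + z) - vhat (y + z')) * vhat' y)"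
proof (rule Bochner_Integration.integrable_bound[OF vhat'_int])
  have c: "continuous_on UNIV (\<lambda>y. (vhat (y + z) - vhat (y + z')) * vhat' y)"
    by (intro continuous_intros continuous_on_compose2[OF vhat_cont] vhat'_cont) auto
  then show "(\<lambda>y. (vhat (y + z) - vhat (y + z')) * vhat' y) \<in> borel_measurable lborel"
    by (simp add: borel_measurable_continuous_onI)
  show "AE y in lborel. norm ((vhat (y + z) - vhat (y + z')) * vhat' y) \<le> norm (vhat' y)"
  proof (rule AE_I2)
    fix y
    have "\<bar>vhat (y + z) - vhat (y + z')\<bar> \<le> 1"
      using vhat_ge0[of "y+z"] vhat_le1[of "y+z"] vhat_ge0[of "y+z'"] vhat_le1[of "y+z'"] by auto
    then show "norm ((vhat (y + z) - vhat (y + z')) * vhat' y) \<le> norm (vhat' y)"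
      using vhat'_ge0[of y] by (simp add: abs_mult mult_left_le_one_le)
  qed
qed

lemma P_lip: "\<bar>P z - P z'\<bar> \<le> B1 * \<bar>z - z'\<bar>"
proof -
  have i1: "integrable lborel (\<lambda>y. (vhat (y + z) - vhat (y + 0)) * vhat' y)" by (rule P_integrable)
  have i2: "integrable lborel (\<lambda>y. (vhat (y + z') - vhat (y + 0)) * vhat' y)" by (rule P_integrable)
  have "P z - P z' = (\<integral>y. (vhat (y + z) - vhat y) * vhat' y - (vhat (y + z') - vhat y) * vhat' y \<partial>lborel)"
    unfolding P_def using i1 i2 by simp
  also have "\<dots> = (\<integral>y. (vhat (y + z) - vhat (y + z')) * vhat' y \<partial>lborel)"
    by (rule Bochner_Integration.integral_cong) (auto simp: algebra_simps)
  finally have e: "P z - P z' = (\<integral>y. (vhat (y + z) - vhat (y + z')) * vhat' y \<partial>lborel)" .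
  have "\<bar>\<integral>y. (vhat (y + z) - vhat (y + z')) * vhat' y \<partial>lborel\<bar> \<le> (\<integral>y. \<bar>(vhat (y + z) - vhat (y + z')) * vhat' y\<bar> \<partial>lborel)"
    using integral_norm_bound[of lborel "\<lambda>y. (vhat (y + z) - vhat (y + z')) * vhat' y"] by simp
  also have "\<dots> \<le> (\<integral>y. B1 * \<bar>z - z'\<bar> * vhat' y \<partial>lborel)"
  proof (rule Bochner_Integration.integral_mono)
    show "integrable lborel (\<lambda>y. \<bar>(vhat (y + z) - vhat (y + z')) * vhat' y\<bar>)"
      using P_integrable[of z z'] by auto
    show "integrable lborel (\<lambda>y. B1 * \<bar>z - z'\<bar> * vhat' y)" using vhat'_int by auto
    fix y
    have "\<bar>vhat (y + z) - vhat (y + z')\<bar> \<le> B1 * \<bar>z - z'\<bar>" using vhat_lip[of "y+z" "y+z'"] by simp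
    then show "\<bar>(vhat (y + z) - vhat (y + z')) * vhat' y\<bar> \<le> B1 * \<bar>z - z'\<bar> * vhat' y"
      using vhat'_ge0[of y] by (simp add: abs_mult mult_right_mono)
  qed
  also have "\<dots> = B1 * \<bar>z - z'\<bar>" using vhat'_integral by simp
  finally show ?thesis using e by simp
qed

lemma P_cont: "continuous_on UNIV P"
  unfolding continuous_on_iff
proof (intro ballI allI impI)
  fix x e :: real assume e: "e > 0"
  have B1p: "B1 > 0" using R_pos by (simp add: B1_def)
  show "\<exists>d>0. \<forall>x'\<in>UNIV. dist x' x < d \<longrightarrow> dist (P x') (P x) < e"
  proof (intro exI[of _ "e / B1"] conjI ballI impI)
    show "e / B1 > 0" using e B1p by simp
    fix y assume "dist y x < e / B1"
    then have "B1 * \<bar>y - x\<bar> < e" using B1p by (simp add: dist_real_def field_simps)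
    then show "dist (P y) (P x) < e" using P_lip[of y x] by (simp add: dist_real_def)
  qed
qed

lemma Vpart: "(\<integral>x. (vhat (x + c * t) - vhat (x + C)) * vhat' (x + C) \<partial>lborel) = P (c * t - C)"
proof -
  have "(\<integral>x. (vhat (x + C + (c * t - C)) - vhat (x + C)) * vhat' (x + C) \<partial>lborel) = P (c * t - C)"
    unfolding P_def by (rule integral_shift[of "\<lambda>y. (vhat (y + (c * t - C)) - vhat y) * vhat' y" C])
  then show ?thesis by simp
qed

lemma Vpart_int: "integrable lborel (\<lambda>x. (vhat (x + c * t) - vhat (x + C)) * vhat' (x + C))"
proof -
  have "integrable lborel (\<lambda>x. (vhat (x + C + (c * t - C)) - vhat (x + C + 0)) * vhat' (x + C))"
    using P_integrable[of "c * t - C" 0] integrable_shift[of "\<lambda>y. (vhat (y + (c * t - C)) - vhat (y + 0)) * vhat' y" C]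
    by simp
  then show ?thesis by simp
qed

lemma g_L2: "L2 (\<lambda>x. vhat' (x + C))"
  unfolding L2_def
proof
  have "continuous_on UNIV (\<lambda>x. vhat' (x + C))"
    by (intro continuous_on_compose2[OF vhat'_cont] continuous_intros) auto
  then show "(\<lambda>x. vhat' (x + C)) \<in> borel_measurable lborel"
    by (simp add: borel_measurable_continuous_onI)
  show "integrable lborel (\<lambda>x. (vhat' (x + C))^2)"
    using integrable_shift[of "\<lambda>x. (vhat' x)^2" C] vhat'_sq_int by simp
qed

lemma g'_L2: "L2 (\<lambda>x. vhat'' (x + C))"
  unfolding L2_def
proof
  have "continuous_on UNIV (\<lambda>x. vhat'' (x + C))"
    by (intro continuous_on_compose2[OF vhat''_cont] continuous_intros) auto
  then show "(\<lambda>x. vhat'' (x + C)) \<in> borel_measurable lborel"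
    by (simp add: borel_measurable_continuous_onI)
  show "integrable lborel (\<lambda>x. (vhat'' (x + C))^2)"
    using integrable_shift[of "\<lambda>x. (vhat'' x)^2" C] vhat''_sq_int by simp
qed

lemma g_weak: "weak_deriv (\<lambda>x. vhat' (x + C)) (\<lambda>x. vhat'' (x + C))"
proof (rule weak_deriv_C1)
  fix x
  have i: "((\<lambda>x. x + C) has_real_derivative 1) (at x)" by (auto intro!: derivative_eq_intros)
  from DERIV_chain2[OF vhat'_deriv i] show "((\<lambda>x. vhat' (x + C)) has_real_derivative vhat'' (x + C)) (at x)"
    by simp
  show "continuous_on UNIV (\<lambda>x. vhat'' (x + C))"
    by (intro continuous_on_compose2[OF vhat''_cont] continuous_intros) auto
qed

definition N2 where "N2 = (\<integral>x. (vhat'' x)^2 \<partial>lborel)"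

lemma g_diff_L2: "(\<integral>x. (vhat' (x + C1) - vhat' (x + C2))^2 \<partial>lborel) \<le> (C1 - C2)^2 * N2"
proof -
  have gen: "(\<integral>x. (vhat' (x + C1) - vhat' (x + C2))^2 \<partial>lborel) \<le> (C1 - C2)^2 * N2" if "C2 \<le> C1" for C1 C2
  proof -
    have "(\<integral>x. (vhat' (x + C2 + (C1 - C2)) - vhat' (x + C2))^2 \<partial>lborel)
        = (\<integral>y. (vhat' (y + (C1 - C2)) - vhat' y)^2 \<partial>lborel)"
      by (rule integral_shift[of "\<lambda>y. (vhat' (y + (C1 - C2)) - vhat' y)^2" C2])
    also have "\<dots> \<le> (C1 - C2)^2 * N2" unfolding N2_def
      by (rule shift_L2_bound[OF vhat'_deriv vhat''_cont vhat'_sq_int vhat''_sq_int]) (use that in simp)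
    finally show ?thesis by simp
  qed
  show ?thesis
  proof (cases "C2 \<le> C1")
    case True then show ?thesis by (rule gen)
  next
    case False
    then have "(\<integral>x. (vhat' (x + C2) - vhat' (x + C1))^2 \<partial>lborel) \<le> (C2 - C1)^2 * N2" by (intro gen) simp
    moreover have "(\<lambda>x. (vhat' (x + C2) - vhat' (x + C1))^2) = (\<lambda>x. (vhat' (x + C1) - vhat' (x + C2))^2)"
      by (simp add: power2_commute)
    moreover have "(C2 - C1)^2 = (C1 - C2)^2" by (simp add: power2_commute)
    ultimately show ?thesis by simp
  qed
qed

lemma N2_nonneg: "N2 \<ge> 0" unfolding N2_def by simp

end

lemma L2_diff:
  assumes "L2 g" "L2 h"
  shows "L2 (\<lambda>x. g x - h x)"
  unfolding L2_def
proof
  show "(\<lambda>x. g x - h x) \<in> borel_measurable lborel" using assms by (auto simp: L2_def)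
  show "integrable lborel (\<lambda>x. (g x - h x)^2)"
  proof (rule Bochner_Integration.integrable_bound[where f="\<lambda>x. 2 * (g x)^2 + 2 * (h x)^2"])
    show "integrable lborel (\<lambda>x. 2 * (g x)^2 + 2 * (h x)^2)" using assms by (auto simp: L2_def)
    show "(\<lambda>x. (g x - h x)^2) \<in> borel_measurable lborel" using assms by (auto simp: L2_def)
    show "AE x in lborel. norm ((g x - h x)^2) \<le> norm (2 * (g x)^2 + 2 * (h x)^2)"
    proof (rule AE_I2)
      fix x
      have "(g x - h x)^2 \<le> 2 * (g x)^2 + 2 * (h x)^2"
        using sum_squares_ge_zero[of "g x + h x" 0] by (simp add: power2_eq_square algebra_simps)
      then show "norm ((g x - h x)^2) \<le> norm (2 * (g x)^2 + 2 * (h x)^2)" by simp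
    qed
  qed
qed

theorem proposition2p2:
  fixes \<nu> b a vs c T :: real
    and f f' f'' vhat vhat' vhat'' u0 :: "real \<Rightarrow> real"
    and u :: "real \<Rightarrow> real \<Rightarrow> real"
  assumes nu_pos: "\<nu> > 0" and b_pos: "b > 0"
    and f_deriv: "\<And>x. (f has_real_derivative f' x) (at x)"
    and f'_cont: "continuous_on UNIV f'"
    and a_range: "0 < a" "a < 1"
    and f_zeros: "f 0 = 0" "f a = 0" "f 1 = 0"
    and f_neg: "\<And>x. 0 < x \<Longrightarrow> x < a \<Longrightarrow> f x < 0"
    and f_pos: "\<And>x. a < x \<Longrightarrow> x < 1 \<Longrightarrow> f x > 0"
    and f'_signs: "f' 0 < 0" "f' a > 0" "f' 1 < 0"
    and f_int: "integral {0..1} f \<ge> 0"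
    and vs_range: "a < vs" "vs < 1"
    and f'_deriv: "\<And>x. x \<in> {0..1} \<Longrightarrow> (f' has_real_derivative f'' x) (at x)"
    and f''_pos: "\<And>x. 0 \<le> x \<Longrightarrow> x < vs \<Longrightarrow> f'' x > 0"
    and f''_neg: "\<And>x. vs < x \<Longrightarrow> x \<le> 1 \<Longrightarrow> f'' x < 0"
    and eta1: "bdd_above (range f')"
    and f_lip: "\<exists>L. \<forall>x1 x2. \<bar>f x1 - f x2\<bar> \<le> L * \<bar>x1 - x2\<bar> * (1 + x1^2 + x2^2)"
    and eta2: "\<exists>\<eta>2. \<forall>v\<in>{0..1}. \<forall>w. \<bar>f (w + v) - f v - f' v * w\<bar> \<le> \<eta>2 * (1 + \<bar>w\<bar>) * w^2"
    and vhat_mono: "mono vhat"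
    and vhat_deriv: "\<And>x. (vhat has_real_derivative vhat' x) (at x)"
    and vhat'_deriv: "\<And>x. (vhat' has_real_derivative vhat'' x) (at x)"
    and vhat''_cont: "continuous_on UNIV vhat''"
    and vhat_bot: "(vhat \<longlongrightarrow> 0) at_bot"
    and vhat_top: "(vhat \<longlongrightarrow> 1) at_top"
    and c_nonneg: "c \<ge> 0"
    and tw_eq: "\<And>x. c * vhat' x = \<nu> * vhat'' x + b * f (vhat x)"
    and T_pos: "T > 0"
    and u0_H: "L2 u0"
    and sol: "variational_solution \<nu> b f c vhat T u0 u"
  shows "continuous_on ({0..T} \<times> UNIV)
           (\<lambda>(t, C). \<integral>x. (u t x + vhat (x + c * t) - vhat (x + C)) * vhat' (x + C) \<partial>lborel)
       \<and> (\<exists>K. \<forall>t\<in>{0..T}. \<forall>C1 C2.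
           \<bar>(\<integral>x. (u t x + vhat (x + c * t) - vhat (x + C1)) * vhat' (x + C1) \<partial>lborel)
            - (\<integral>x. (u t x + vhat (x + c * t) - vhat (x + C2)) * vhat' (x + C2) \<partial>lborel)\<bar>
           \<le> K * \<bar>C1 - C2\<bar>)"
proof -
  have f_cont: "continuous_on UNIV f"
    using f_deriv by (meson DERIV_isCont continuous_at_imp_continuous_on)
  interpret tw \<nu> b c a f vhat vhat' vhat''
    by unfold_locales (use nu_pos b_pos c_nonneg f_cont a_range f_zeros f_neg f_pos vhat_mono
        vhat_deriv vhat'_deriv vhat''_cont vhat_bot vhat_top tw_eq in auto)
  from sol have uL2: "\<And>t. t \<in> {0..T} \<Longrightarrow> L2 (u t)"
    unfolding variational_solution_def by blast
  from sol obtain M where M: "AE t in lborel. t \<in> {0..T} \<longrightarrow> (\<integral>x. (u t x)^2 \<partial>lborel) \<le> M"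
    unfolding variational_solution_def by blast
  from sol obtain ux where eqs: "\<forall>w w'. L2 w \<and> L2 w' \<and> weak_deriv w w' \<longrightarrow>
           set_integrable lborel {0..T}
             (\<lambda>s. - \<nu> * (\<integral>x. ux s x * w' x \<partial>lborel)
                  + b * (\<integral>x. (f (u s x + vhat (x + c * s)) - f (vhat (x + c * s))) * w x \<partial>lborel)) \<and>
           (\<forall>t\<in>{0..T}.
              (\<integral>x. u t x * w x \<partial>lborel) =
              (\<integral>x. u0 x * w x \<partial>lborel) +
              (LINT s:{0..t}|lborel. - \<nu> * (\<integral>x. ux s x * w' x \<partial>lborel)
                  + b * (\<integral>x. (f (u s x + vhat (x + c * s)) - f (vhat (x + c * s))) * w x \<partial>lborel)))"
    unfolding variational_solution_def by blast
  define U where "U t C = (\<integral>x. u t x * vhat' (x + C) \<partial>lborel)" for t C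
  have Ucont: "continuous_on {0..T} (\<lambda>t. U t C)" for C
  proof -
    from eqs[rule_format, of "\<lambda>x. vhat' (x + C)" "\<lambda>x. vhat'' (x + C)"] g_L2 g'_L2 g_weak
    have SI: "set_integrable lborel {0..T}
             (\<lambda>s. - \<nu> * (\<integral>x. ux s x * vhat'' (x + C) \<partial>lborel)
                  + b * (\<integral>x. (f (u s x + vhat (x + c * s)) - f (vhat (x + c * s))) * vhat' (x + C) \<partial>lborel))"
      and EQ: "\<forall>t\<in>{0..T}. U t C = (\<integral>x. u0 x * vhat' (x + C) \<partial>lborel) +
              (LINT s:{0..t}|lborel. - \<nu> * (\<integral>x. ux s x * vhat'' (x + C) \<partial>lborel)
                  + b * (\<integral>x. (f (u s x + vhat (x + c * s)) - f (vhat (x + c * s))) * vhat' (x + C) \<partial>lborel))"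
      unfolding U_def by auto
    have "continuous_on {0..T} (\<lambda>t. (\<integral>x. u0 x * vhat' (x + C) \<partial>lborel) +
              (LINT s:{0..t}|lborel. - \<nu> * (\<integral>x. ux s x * vhat'' (x + C) \<partial>lborel)
                  + b * (\<integral>x. (f (u s x + vhat (x + c * s)) - f (vhat (x + c * s))) * vhat' (x + C) \<partial>lborel)))"
      by (intro continuous_intros cont_set_integral[OF SI])
    then show ?thesis
    proof (rule continuous_on_cong[THEN iffD1, OF refl, rotated])
      fix t assume "t \<in> {0..T}"
      then show "(\<integral>x. u0 x * vhat' (x + C) \<partial>lborel) +
              (LINT s:{0..t}|lborel. - \<nu> * (\<integral>x. ux s x * vhat'' (x + C) \<partial>lborel)
                  + b * (\<integral>x. (f (u s x + vhat (x + c * s)) - f (vhat (x + c * s))) * vhat' (x + C) \<partial>lborel)) = U t C"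
        using EQ by simp
    qed
  qed
  define M' where "M' = max M 0"
  define K0 where "K0 = (M' + N2) / 2"
  have Uae: "AE t in lborel. t \<in> {0..T} \<longrightarrow> \<bar>U t C1 - U t C2\<bar> \<le> K0 * \<bar>C1 - C2\<bar>" for C1 C2
    using M
  proof eventually_elim
    case (elim t)
    show ?case
    proof
      assume t: "t \<in> {0..T}"
      have Mt: "(\<integral>x. (u t x)^2 \<partial>lborel) \<le> M'" using elim t by (simp add: M'_def)
      have Lu: "L2 (u t)" by (rule uL2[OF t])
      have Ld: "L2 (\<lambda>x. vhat' (x + C1) - vhat' (x + C2))" by (intro L2_diff g_L2)
      have "U t C1 - U t C2 = (\<integral>x. u t x * vhat' (x + C1) - u t x * vhat' (x + C2) \<partial>lborel)"
        unfolding U_def using L2_prod_int[OF Lu g_L2[of C1]] L2_prod_int[OF Lu g_L2[of C2]] by simp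
      also have "\<dots> = (\<integral>x. u t x * (vhat' (x + C1) - vhat' (x + C2)) \<partial>lborel)"
        by (simp add: right_diff_distrib)
      finally have e: "U t C1 - U t C2 = (\<integral>x. u t x * (vhat' (x + C1) - vhat' (x + C2)) \<partial>lborel)" .
      show "\<bar>U t C1 - U t C2\<bar> \<le> K0 * \<bar>C1 - C2\<bar>"
      proof (cases "C1 = C2")
        case True then show ?thesis by simp
      next
        case False
        define l where "l = \<bar>C1 - C2\<bar>"
        have l: "l > 0" using False by (simp add: l_def)
        have "\<bar>U t C1 - U t C2\<bar> \<le> (l * (\<integral>x. (u t x)^2 \<partial>lborel) + (\<integral>x. (vhat' (x + C1) - vhat' (x + C2))^2 \<partial>lborel) / l) / 2"
          unfolding e by (rule L2_amgm[OF Lu Ld l])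
        also have "\<dots> \<le> (l * M' + ((C1 - C2)^2 * N2) / l) / 2"
          using Mt g_diff_L2[of C1 C2] l
          by (intro divide_right_mono add_mono mult_left_mono) auto
        also have "(C1 - C2)^2 = l * l" by (simp add: l_def power2_eq_square abs_mult_self_eq)
        also have "(l * M' + (l * l * N2) / l) / 2 = K0 * \<bar>C1 - C2\<bar>"
          using l by (simp add: K0_def l_def field_simps)
        finally show ?thesis .
      qed
    qed
  qed
  have Ulip: "\<bar>U t C1 - U t C2\<bar> \<le> K0 * \<bar>C1 - C2\<bar>" if t: "t \<in> {0..T}" for t C1 C2
  proof -
    have "continuous_on {0..T} (\<lambda>t. \<bar>U t C1 - U t C2\<bar>)"
      by (intro continuous_intros Ucont)
    from AE_to_all[OF this T_pos Uae[of C1 C2]] t show ?thesis by blast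
  qed
  have main_eq: "(\<integral>x. (u t x + vhat (x + c * t) - vhat (x + C)) * vhat' (x + C) \<partial>lborel) = U t C + P (c * t - C)"
    if t: "t \<in> {0..T}" for t C
  proof -
    have "(\<integral>x. (u t x + vhat (x + c * t) - vhat (x + C)) * vhat' (x + C) \<partial>lborel)
        = (\<integral>x. u t x * vhat' (x + C) + (vhat (x + c * t) - vhat (x + C)) * vhat' (x + C) \<partial>lborel)"
      by (rule Bochner_Integration.integral_cong) (auto simp: algebra_simps)
    also have "\<dots> = U t C + (\<integral>x. (vhat (x + c * t) - vhat (x + C)) * vhat' (x + C) \<partial>lborel)"
      unfolding U_def using L2_prod_int[OF uL2[OF t] g_L2[of C]] Vpart_int[of t C] by simp
    finally show ?thesis by (simp add: Vpart)
  qed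
  have c1: "continuous_on ({0..T} \<times> UNIV) (\<lambda>(t, C). U t C)"
    by (rule joint_cont[OF Ucont Ulip])
  have c2: "continuous_on ({0..T} \<times> UNIV) (\<lambda>p. P (c * fst p - snd p))"
    by (intro continuous_on_compose2[OF P_cont] continuous_intros) auto
  have "continuous_on ({0..T} \<times> UNIV) (\<lambda>p. (\<lambda>(t, C). U t C) p + P (c * fst p - snd p))"
    by (intro continuous_on_add c1 c2)
  then have cont: "continuous_on ({0..T} \<times> UNIV)
           (\<lambda>(t, C). \<integral>x. (u t x + vhat (x + c * t) - vhat (x + C)) * vhat' (x + C) \<partial>lborel)"
  proof (rule continuous_on_cong[THEN iffD1, OF refl, rotated])
    fix p :: "real \<times> real" assume "p \<in> {0..T} \<times> UNIV"
    then show "(\<lambda>(t, C). U t C) p + P (c * fst p - snd p) =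
      (\<lambda>(t, C). \<integral>x. (u t x + vhat (x + c * t) - vhat (x + C)) * vhat' (x + C) \<partial>lborel) p"
      by (cases p) (simp add: main_eq)
  qed
  have lip: "\<forall>t\<in>{0..T}. \<forall>C1 C2.
           \<bar>(\<integral>x. (u t x + vhat (x + c * t) - vhat (x + C1)) * vhat' (x + C1) \<partial>lborel)
            - (\<integral>x. (u t x + vhat (x + c * t) - vhat (x + C2)) * vhat' (x + C2) \<partial>lborel)\<bar>
           \<le> (K0 + B1) * \<bar>C1 - C2\<bar>"
  proof (intro ballI allI)
    fix t C1 C2 assume t: "t \<in> {0..T}"
    have "\<bar>P (c * t - C1) - P (c * t - C2)\<bar> \<le> B1 * \<bar>C1 - C2\<bar>"
      using P_lip[of "c * t - C1" "c * t - C2"] by (simp add: abs_minus_commute)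
    then show "\<bar>(\<integral>x. (u t x + vhat (x + c * t) - vhat (x + C1)) * vhat' (x + C1) \<partial>lborel)
            - (\<integral>x. (u t x + vhat (x + c * t) - vhat (x + C2)) * vhat' (x + C2) \<partial>lborel)\<bar>
           \<le> (K0 + B1) * \<bar>C1 - C2\<bar>"
      unfolding main_eq[OF t] using Ulip[OF t, of C1 C2] by (simp add: distrib_right abs_le_iff)
  qed
  show ?thesis using cont lip by blast
qed


end
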